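(* In the setting of Bandit-MFW (defined in the context), assume $\max_{\mathbf x\in\mathcal C}\|\nabla f_t(\mathbf x)\|\le G$ and $\sup_{\mathbf x\in\mathcal C}f_t(\mathbf x)\le M_1$ for all $t$. Let $\mathbf x^*\in\arg\max_{\mathbf x\in\mathcal C}\sum_{t=1}^Tf_t(\mathbf x)$, $\mathbf x^*_\delta\in\arg\max_{\mathbf x\in\mathcal C'}\sum_{t=1}^Tf_t(\mathbf x)$, $\tilde{\mathbf x}^*_\delta=(\mathbf x^*_\delta-\delta\mathbf 1)\oslash(\mathbf 1-\delta\mathbf 1)$ and $\tilde{\mathbf x}_q^{(K)}=(\mathbf x_q^{(K)}-\delta\mathbf 1)\oslash(\mathbf 1-\delta\mathbf 1)$. Then $$\sum_{t=1}^T\frac1ef_t(\mathbf x^* )-\sum_{t=1}^Tf_t(\mathbf y_t)\le L\sum_{q=1}^Q\frac1e\bar F_q(\tilde{\mathbf x}^*_\delta)-L\sum_{q=1}^Q\bar F_q(\tilde{\mathbf x}_q^{(K)})+2M_1KQ+\Big((\sqrt n+1)\frac{r(\mathcal C)}r+\sqrt n+2\Big)TG\delta.$$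
   Context: Notation: $\odot$, $\oslash$ coordinatewise product/division; $\mathbf 0,\mathbf 1$ all-zeros/all-ones vectors; $\|\cdot\|$ Euclidean norm; $B^n$ closed unit ball, $S^{n-1}$ unit sphere; $r(\mathcal C)=\max_{\mathbf x\in\mathcal C}\|\mathbf x\|$. $\mathcal C\subseteq[0,1]^n$ is down-closed convex (i.e. $\mathbf y\in\mathcal C$, $\mathbf 0\le\mathbf x\le\mathbf y$ imply $\mathbf x\in\mathcal C$), $\mathbf 0\in\mathcal C$, and $rB^n_{\ge0}\subseteq\mathcal C$ with $B^n_{\ge0}=B^n\cap\mathbb R^n_+$, $r>0$; $0<\delta<\frac r{\sqrt n+1}$, $\alpha=\frac{(\sqrt n+1)\delta}r$, $\mathcal C'=(1-\alpha)\mathcal C+\delta\mathbf 1$. Each $f_t$ ($t\in[T]$, fixed in advance) is nonnegative, differentiable, DR-submodular ($\nabla f(\mathbf x)\le\nabla f(\mathbf y)$ when $\mathbf x\ge\mathbf y$) and $L_0$-smooth on $[-\delta,1+\delta]^n$. Smoothing: $\hat f_{t,\delta}(\mathbf x)=\mathbb E_{\mathbf v\sim B^n}f_t(\mathbf x+\delta\mathbf v)$ ($\mathbf v$ uniform in $B^n$). $T=LQ$, $K\le L$. Bandit-MFW: oracles $\mathcal E^{(1)},\dots,\mathcal E^{(K)}$ over $\mathcal C'$; blocks $q=1,\dots,Q$ of rounds $(q-1)L+1,\dots,qL$. In block $q$: $\mathbf x_q^{(0)}=\delta\mathbf 1$; for $k\in[K]$, $\mathbf v_q^{(k)}\in\mathcal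 C'$ is the output of $\mathcal E^{(k)}$, $\tilde{\mathbf v}_q^{(k)}=(\mathbf v_q^{(k)}-\delta\mathbf 1)\oslash(\mathbf 1-\delta\mathbf 1)$, $\mathbf x_q^{(k)}=\mathbf x_q^{(k-1)}+\frac1K\tilde{\mathbf v}_q^{(k)}\odot(\mathbf 1-\mathbf x_q^{(k-1)})$; a uniformly random permutation $(t_q^{(1)},\dots,t_q^{(L)})$ of the block's rounds is drawn; in round $t_q^{(k)}$, $k\le K$, play $\mathbf y_t=\mathbf x_q^{(k)}+\delta\mathbf u_q^{(k)}$ with $\mathbf u_q^{(k)}$ uniform on $S^{n-1}$; in other rounds of the block play $\mathbf y_t=\mathbf x_q^{(K)}$; then $\mathbf g_q^{(0)}=\mathbf 0$, $\mathbf g_q^{(k)}=(1-\eta_k)\mathbf g_q^{(k-1)}+\eta_k\frac n\delta f_{t_q^{(k)}}(\mathbf x_q^{(k)}+\delta\mathbf u_q^{(k)})\mathbf u_q^{(k)}$, $\tilde{\mathbf x}_q^{(k)}=(\mathbf x_q^{(k)}-\delta\mathbf 1)\oslash(\mathbf 1-\delta\mathbf 1)$, and $(\mathbf 1-\tilde{\mathbf x}_q^{(k)})\odot\mathbf g_q^{(k)}$ is fed to $\mathcal E^{(k)}$. Block averages: $\bar F_q(\mathbf x)=\frac1L\sum_{m=(q-1)L+1}^{qL}\hat f_{m,\delta}\big((\mathbf 1-\delta\mathbf 1)\odot\mathbf x+\delta\mathbf 1\big)$. *)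

theory Defs
  imports "HOL-Analysis.Analysis"
begin

definition cvec :: "real \<Rightarrow> real^'n" where
  "cvec c = (\<chi> i. c)"

definition hprod :: "real^'n \<Rightarrow> real^'n \<Rightarrow> real^'n" where
  "hprod x y = (\<chi> i. x$i * y$i)"

definition hdiv :: "real^'n \<Rightarrow> real^'n \<Rightarrow> real^'n" where
  "hdiv x y = (\<chi> i. x$i / y$i)"

definition down_closed :: "(real^'n) set \<Rightarrow> bool" where
  "down_closed C \<longleftrightarrow> (\<forall>y\<in>C. \<forall>x. 0 \<le> x \<and> x \<le> y \<longrightarrow> x \<in> C)"

definition radius :: "(real^'n) set \<Rightarrow> real" where
  "radius C = (SUP x\<in>C. norm x)"

definition shrink_set :: "(real^'n) set \<Rightarrow> real \<Rightarrow> real \<Rightarrow> (real^'n) set" where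
  "shrink_set C r \<delta> =
     (let \<alpha> = (sqrt (real CARD('n)) + 1) * \<delta> / r
      in (\<lambda>x. (1 - \<alpha>) *\<^sub>R x + cvec \<delta>) ` C)"

definition smooth :: "real \<Rightarrow> (real^'n \<Rightarrow> real) \<Rightarrow> real^'n \<Rightarrow> real" where
  "smooth \<delta> f x = integral (cball 0 1) (\<lambda>v. f (x + \<delta> *\<^sub>R v)) / measure lborel (cball (0::real^'n) 1)"

definition untilde :: "real \<Rightarrow> real^'n \<Rightarrow> real^'n" where
  "untilde \<delta> z = hdiv (z - cvec \<delta>) (cvec 1 - cvec \<delta>)"

text \<open>Iterates x_q^(k) of Bandit-MFW in block q, given oracle outputs v q k (k = 1..K).\<close>
fun mfw_x :: "nat \<Rightarrow> real \<Rightarrow> (nat \<Rightarrow> nat \<Rightarrow> real^'n) \<Rightarrow> nat \<Rightarrow> nat \<Rightarrow> real^'n" where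
  "mfw_x K \<delta> v q 0 = cvec \<delta>"
| "mfw_x K \<delta> v q (Suc k) =
     mfw_x K \<delta> v q k + (1 / real K) *\<^sub>R hprod (untilde \<delta> (v q (Suc k))) (cvec 1 - mfw_x K \<delta> v q k)"

definition block_avg :: "nat \<Rightarrow> real \<Rightarrow> (nat \<Rightarrow> real^'n \<Rightarrow> real) \<Rightarrow> nat \<Rightarrow> real^'n \<Rightarrow> real" where
  "block_avg L \<delta> f q x =
     (1 / real L) * (\<Sum>m = (q - 1) * L + 1 .. q * L.
        smooth \<delta> (f m) (hprod (cvec 1 - cvec \<delta>) x + cvec \<delta>))"

end

theory Submission
  imports Defs
begin

lemma intg: "continuous_on (cball (0::real^'n) 1) g \<Longrightarrow> (g::_\<Rightarrow>real) integrable_on cball 0 1"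
  apply (rule set_borel_integral_eq_integral(1))
  unfolding set_integrable_def
  using borel_integrable_compact[of "cball (0::real^'n) 1" g] by simp

lemma intconst: "integral (cball (0::real^'n) 1) (\<lambda>x. c::real) = c * measure lborel (cball (0::real^'n) 1)"
proof -
  have "integral (cball (0::real^'n) 1) (\<lambda>x. c::real) = c * integral (cball (0::real^'n) 1) (\<lambda>x. 1::real)"
    using integral_mult_right[of "cball (0::real^'n) 1" c "\<lambda>x. 1::real"] by simp
  also have "integral (cball (0::real^'n) 1) (\<lambda>x. 1::real) = measure lborel (cball (0::real^'n) 1)"
    using lmeasure_integral[of "cball (0::real^'n) 1"] by simp
  finally show ?thesis .
qed

lemma smooth_cont:
  fixes g :: "real^'n \<Rightarrow> real"
  assumes cont: "continuous_on S g" and inS: "\<And>w. norm w \<le> 1 \<Longrightarrow> x + \<delta> *\<^sub>R w \<in> S"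
  shows "continuous_on (cball 0 1) (\<lambda>w. g (x + \<delta> *\<^sub>R w))"
  by (rule continuous_on_compose2[OF cont]) (auto intro!: continuous_intros inS)

lemma smooth_le:
  fixes g :: "real^'n \<Rightarrow> real"
  assumes cont: "continuous_on S g" and inS: "\<And>w. norm w \<le> 1 \<Longrightarrow> x + \<delta> *\<^sub>R w \<in> S"
    and ub: "\<And>w. norm w \<le> 1 \<Longrightarrow> g (x + \<delta> *\<^sub>R w) \<le> b"
  shows "smooth \<delta> g x \<le> b"
proof -
  let ?m = "measure lborel (cball (0::real^'n) 1)"
  have m: "?m > 0" by (simp add: content_cball_pos)
  have "integral (cball 0 1) (\<lambda>w. g (x + \<delta> *\<^sub>R w)) \<le> integral (cball (0::real^'n) 1) (\<lambda>w. b)"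
    by (rule integral_le[OF intg[OF smooth_cont[OF cont inS]] integrable_on_const]) (auto intro: ub)
  also have "\<dots> = b * ?m" by (rule intconst)
  finally show ?thesis unfolding smooth_def using m by (simp add: divide_le_eq)
qed

lemma smooth_ge:
  fixes g :: "real^'n \<Rightarrow> real"
  assumes cont: "continuous_on S g" and inS: "\<And>w. norm w \<le> 1 \<Longrightarrow> x + \<delta> *\<^sub>R w \<in> S"
    and lb: "\<And>w. norm w \<le> 1 \<Longrightarrow> b \<le> g (x + \<delta> *\<^sub>R w)"
  shows "b \<le> smooth \<delta> g x"
proof -
  let ?m = "measure lborel (cball (0::real^'n) 1)"
  have m: "?m > 0" by (simp add: content_cball_pos)
  have "b * ?m = integral (cball (0::real^'n) 1) (\<lambda>w. b)" by (rule intconst[symmetric])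
  also have "\<dots> \<le> integral (cball 0 1) (\<lambda>w. g (x + \<delta> *\<^sub>R w))"
    by (rule integral_le[OF integrable_on_const intg[OF smooth_cont[OF cont inS]]]) (auto intro: lb)
  finally show ?thesis unfolding smooth_def using m by (simp add: le_divide_eq)
qed

lemma lip:
  fixes g :: "real^'n \<Rightarrow> real"
  assumes "convex C" "\<And>x. x\<in>C \<Longrightarrow> (g has_derivative (\<lambda>h. d x \<bullet> h)) (at x within C)"
    "\<And>x. x\<in>C \<Longrightarrow> norm (d x) \<le> G" "x\<in>C" "y\<in>C"
  shows "\<bar>g x - g y\<bar> \<le> G * norm (x - y)"
proof -
  have "norm (g x - g y) \<le> G * norm (x - y)"
  proof (rule differentiable_bound[OF assms(1) assms(2) _ assms(4,5)])
    fix z assume z: "z \<in> C"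
    have "onorm (\<lambda>h. d z \<bullet> h) \<le> norm (d z) * onorm (\<lambda>x::real^'n. x)"
      using onorm_inner_right[of "\<lambda>x::real^'n. x" "d z"] bounded_linear_ident by simp
    also have "\<dots> \<le> norm (d z) * 1" by (intro mult_left_mono onorm_id_le) auto
    also have "\<dots> \<le> G" using assms(3)[OF z] by simp
    finally show "onorm (\<lambda>h. d z \<bullet> h) \<le> G" .
  qed
  then show ?thesis by simp
qed

lemma block_sum:
  fixes g :: "nat \<Rightarrow> real"
  shows "(\<Sum>t=1..L*Q. g t) = (\<Sum>q=1..Q. \<Sum>m=(q-1)*L+1..q*L. g m)"
proof (induction Q)
  case 0 then show ?case by simp
next
  case (Suc Q)
  have "(\<Sum>t=1..L*Suc Q. g t) = (\<Sum>t=1..L*Q + L. g t)" by (simp add: algebra_simps)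
  also have "\<dots> = (\<Sum>t=1..L*Q. g t) + (\<Sum>t=L*Q+1..L*Q + L. g t)"
    by (rule sum.ub_add_nat) simp
  finally show ?case using Suc by (simp add: algebra_simps)
qed

lemma untilde_inv:
  assumes "\<delta> \<noteq> 1"
  shows "hprod (cvec 1 - cvec \<delta>) (untilde \<delta> z) + cvec \<delta> = (z::real^'n)"
  using assms by (simp add: vec_eq_iff hprod_def untilde_def hdiv_def cvec_def)

lemma norm_cvec: "norm (cvec c :: real^'n) = \<bar>c\<bar> * sqrt (real CARD('n))"
proof -
  have "norm (cvec c :: real^'n) = sqrt (\<Sum>i\<in>(UNIV::'n set). c^2)"
    by (simp add: norm_vec_def L2_set_def cvec_def)
  also have "\<dots> = \<bar>c\<bar> * sqrt (real CARD('n))" by (simp add: real_sqrt_mult)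
  finally show ?thesis .
qed

theorem mainTheorem11:
  fixes C :: "(real^'n) set"
    and r \<delta> L0 G M1 :: real
    and L Q K :: nat
    and f :: "nat \<Rightarrow> real^'n \<Rightarrow> real"
    and grad :: "nat \<Rightarrow> real^'n \<Rightarrow> real^'n"
    and v :: "nat \<Rightarrow> nat \<Rightarrow> real^'n"
    and \<sigma> :: "nat \<Rightarrow> nat \<Rightarrow> nat"
    and u :: "nat \<Rightarrow> nat \<Rightarrow> real^'n"
    and y :: "nat \<Rightarrow> real^'n"
    and xstar xstar\<delta> :: "real^'n"
  assumes C_box: "C \<subseteq> cbox 0 (cvec 1)"
    and C_convex: "convex C"
    and C_down: "down_closed C"
    and C_zero: "0 \<in> C"
    and r_pos: "r > 0"
    and C_ball: "{x. norm x \<le> r \<and> 0 \<le> x} \<subseteq> C"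
    and \<delta>_pos: "0 < \<delta>"
    and \<delta>_small: "\<delta> < r / (sqrt (real CARD('n)) + 1)"
    and K_pos: "1 \<le> K" and K_le: "K \<le> L"
    and f_nonneg: "\<And>t x. t \<in> {1..L*Q} \<Longrightarrow> x \<in> cbox (cvec (-\<delta>)) (cvec (1+\<delta>)) \<Longrightarrow> 0 \<le> f t x"
    and f_deriv: "\<And>t x. t \<in> {1..L*Q} \<Longrightarrow> x \<in> cbox (cvec (-\<delta>)) (cvec (1+\<delta>)) \<Longrightarrow>
        (f t has_derivative (\<lambda>h. grad t x \<bullet> h)) (at x within cbox (cvec (-\<delta>)) (cvec (1+\<delta>)))"
    and f_DR: "\<And>t x z. t \<in> {1..L*Q} \<Longrightarrow> x \<in> cbox (cvec (-\<delta>)) (cvec (1+\<delta>)) \<Longrightarrow>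
        z \<in> cbox (cvec (-\<delta>)) (cvec (1+\<delta>)) \<Longrightarrow> z \<le> x \<Longrightarrow> grad t x \<le> grad t z"
    and f_smooth: "\<And>t x z. t \<in> {1..L*Q} \<Longrightarrow> x \<in> cbox (cvec (-\<delta>)) (cvec (1+\<delta>)) \<Longrightarrow>
        z \<in> cbox (cvec (-\<delta>)) (cvec (1+\<delta>)) \<Longrightarrow> norm (grad t x - grad t z) \<le> L0 * norm (x - z)"
    and grad_bound: "\<And>t x. t \<in> {1..L*Q} \<Longrightarrow> x \<in> C \<Longrightarrow> norm (grad t x) \<le> G"
    and f_bound: "\<And>t x. t \<in> {1..L*Q} \<Longrightarrow> x \<in> C \<Longrightarrow> f t x \<le> M1"
    and v_in: "\<And>q k. q \<in> {1..Q} \<Longrightarrow> k \<in> {1..K} \<Longrightarrow> v q k \<in> shrink_set C r \<delta>"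
    and \<sigma>_perm: "\<And>q. q \<in> {1..Q} \<Longrightarrow> bij_betw (\<sigma> q) {1..L} {(q - 1) * L + 1 .. q * L}"
    and u_sphere: "\<And>q k. q \<in> {1..Q} \<Longrightarrow> k \<in> {1..K} \<Longrightarrow> u q k \<in> sphere 0 1"
    and y_explore: "\<And>q k. q \<in> {1..Q} \<Longrightarrow> k \<in> {1..K} \<Longrightarrow>
        y (\<sigma> q k) = mfw_x K \<delta> v q k + \<delta> *\<^sub>R u q k"
    and y_exploit: "\<And>q k. q \<in> {1..Q} \<Longrightarrow> k \<in> {K+1..L} \<Longrightarrow>
        y (\<sigma> q k) = mfw_x K \<delta> v q K"
    and xstar_in: "xstar \<in> C"
    and xstar_max: "\<And>x. x \<in> C \<Longrightarrow> (\<Sum>t=1..L*Q. f t x) \<le> (\<Sum>t=1..L*Q. f t xstar)"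
    and xstar\<delta>_in: "xstar\<delta> \<in> shrink_set C r \<delta>"
    and xstar\<delta>_max: "\<And>x. x \<in> shrink_set C r \<delta> \<Longrightarrow> (\<Sum>t=1..L*Q. f t x) \<le> (\<Sum>t=1..L*Q. f t xstar\<delta>)"
  shows "(\<Sum>t=1..L*Q. (1 / exp 1) * f t xstar) - (\<Sum>t=1..L*Q. f t (y t))
    \<le> real L * (\<Sum>q=1..Q. (1 / exp 1) * block_avg L \<delta> f q (untilde \<delta> xstar\<delta>))
      - real L * (\<Sum>q=1..Q. block_avg L \<delta> f q (untilde \<delta> (mfw_x K \<delta> v q K)))
      + 2 * M1 * real K * real Q
      + ((sqrt (real CARD('n)) + 1) * radius C / r + sqrt (real CARD('n)) + 2) * real (L*Q) * G * \<delta>"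
proof -
  define n where "n = real CARD('n)"
  define \<alpha> where "\<alpha> = (sqrt n + 1) * \<delta> / r"
  define B :: "(real^'n) set" where "B = cbox (cvec (-\<delta>)) (cvec (1+\<delta>))"
  define T where "T = L * Q"
  have n1: "n \<ge> 1" unfolding n_def by (simp add: Suc_le_eq)
  have sn: "sqrt n \<ge> 1" using n1 by simp
  have pos1: "0 < sqrt n + 1" using sn by linarith
  have CB: "C \<subseteq> B"
  proof
    fix x assume "x \<in> C"
    then have "x \<in> cbox 0 (cvec 1)" using C_box by auto
    then show "x \<in> B" unfolding B_def using \<delta>_pos by (auto simp: mem_box_cart cvec_def; smt (verit))
  qed
  have C01: "0 \<le> x $ i \<and> x $ i \<le> 1" if "x \<in> C" for x i
    using that C_box by (auto simp: mem_box_cart cvec_def)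
  have r1: "r \<le> 1"
  proof -
    obtain i :: 'n where True by simp
    have "norm (r *\<^sub>R axis i (1::real)) \<le> r" using r_pos by simp
    moreover have "0 \<le> r *\<^sub>R axis i (1::real)" using r_pos by (simp add: less_eq_vec_def axis_def)
    ultimately have "r *\<^sub>R axis i 1 \<in> C"
      using C_ball by auto
    from C01[OF this, of i] show ?thesis by (simp add: axis_def)
  qed
  have \<delta>r: "(sqrt n + 1) * \<delta> < r"
  proof -
    have pos: "0 < sqrt n + 1" using sn by linarith
    from \<delta>_small have "\<delta> < r / (sqrt n + 1)" unfolding n_def .
    then show ?thesis using pos by (simp add: less_divide_eq mult.commute)
  qed
  have \<alpha>_pos: "0 < \<alpha>" unfolding \<alpha>_def using \<delta>_pos r_pos pos1 by (intro divide_pos_pos mult_pos_pos)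
  have \<alpha>_lt: "\<alpha> < 1" unfolding \<alpha>_def using \<delta>r r_pos by simp
  have \<alpha>_ge: "\<delta> \<le> \<alpha>"
  proof -
    have "\<delta> * r \<le> \<delta> * (sqrt n + 1)" using r1 sn \<delta>_pos by (intro mult_left_mono) linarith+
    then show ?thesis unfolding \<alpha>_def using r_pos by (simp add: field_simps)
  qed
  have \<delta>1: "\<delta> < 1" using \<alpha>_ge \<alpha>_lt by simp
  have \<delta>\<alpha>: "\<delta> / \<alpha> = r / (sqrt n + 1)"
  proof -
    have "(sqrt n + 1) * \<delta> > 0" using pos1 \<delta>_pos by simp
    then show ?thesis unfolding \<alpha>_def using \<delta>_pos r_pos pos1
      by (simp add: divide_simps)
  qed
  have shrink_iff: "z \<in> shrink_set C r \<delta> \<longleftrightarrow> (\<exists>c\<in>C. z = (1 - \<alpha>) *\<^sub>R c + cvec \<delta>)" for z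
    unfolding shrink_set_def Let_def \<alpha>_def n_def by auto
  have ballC: "(1 - \<alpha>) *\<^sub>R c + cvec \<delta> + \<delta> *\<^sub>R w \<in> C" if c: "c \<in> C" and w: "norm w \<le> 1" for c w
  proof -
    define z where "z = (\<delta> / \<alpha>) *\<^sub>R (cvec 1 + w)"
    have z0: "0 \<le> z"
    proof -
      have "0 \<le> 1 + w $ i" for i
        using component_le_norm_cart[of w i] w by linarith
      then show ?thesis unfolding z_def less_eq_vec_def using \<delta>_pos \<alpha>_pos by (simp add: cvec_def)
    qed
    have "norm z \<le> (\<delta> / \<alpha>) * (norm (cvec 1 :: real^'n) + norm w)"
      unfolding z_def using \<delta>_pos \<alpha>_pos norm_triangle_ineq[of "cvec 1 :: real^'n" w]
      by (simp add: divide_right_mono mult_left_mono)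
    also have "\<dots> \<le> (\<delta> / \<alpha>) * (sqrt n + 1)"
      using w \<delta>_pos \<alpha>_pos by (intro mult_left_mono) (auto simp: norm_cvec n_def)
    also have "\<dots> = r" using \<delta>\<alpha> pos1 by simp
    finally have "z \<in> C" using C_ball z0 by auto
    then have "(1 - \<alpha>) *\<^sub>R c + \<alpha> *\<^sub>R z \<in> C"
      using convexD[OF C_convex c, of z "1 - \<alpha>" \<alpha>] \<alpha>_pos \<alpha>_lt by simp
    moreover have "\<alpha> *\<^sub>R z = cvec \<delta> + \<delta> *\<^sub>R w"
      unfolding z_def using \<alpha>_pos by (simp add: vec_eq_iff cvec_def algebra_simps)
    ultimately show ?thesis by (simp add: add.assoc)
  qed
  have ballS: "z + \<delta> *\<^sub>R w \<in> C" if "z \<in> shrink_set C r \<delta>" "norm w \<le> 1" for z w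
    using that ballC unfolding shrink_iff by auto
  have SC: "z \<in> C" if "z \<in> shrink_set C r \<delta>" for z
    using ballS[OF that, of 0] by simp
  have iter: "mfw_x K \<delta> v q k \<in> shrink_set C r \<delta>" if q: "q \<in> {1..Q}" and k: "k \<le> K" for q k
  proof -
    define c where "c j = inverse (1 - \<alpha>) *\<^sub>R (v q j - cvec \<delta>)" for j
    have cC: "c j \<in> C" and vc: "v q j = (1 - \<alpha>) *\<^sub>R c j + cvec \<delta>" if jK: "j \<in> {1..K}" for j
    proof -
      obtain c' where c': "c' \<in> C" "v q j = (1 - \<alpha>) *\<^sub>R c' + cvec \<delta>"
        using v_in[OF q jK] unfolding shrink_iff by auto
      have "c j = c'" unfolding c_def c'(2) using \<alpha>_lt by simp
      then show "c j \<in> C" "v q j = (1 - \<alpha>) *\<^sub>R c j + cvec \<delta>" using c' by auto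
    qed
    have vt: "untilde \<delta> (v q j) $ i = (1 - \<alpha>) * c j $ i / (1 - \<delta>)" if "j \<in> {1..K}" for j i
      using vc[OF that] by (simp add: untilde_def hdiv_def cvec_def)
    have Kp: "real K > 0" using K_pos by simp
    have claim: "k \<le> K \<Longrightarrow> (\<forall>i. \<delta> \<le> mfw_x K \<delta> v q k $ i \<and>
        mfw_x K \<delta> v q k $ i \<le> \<delta> + (1 - \<alpha>) / K * (\<Sum>j=1..k. c j $ i))" for k
    proof (induction k)
      case 0 then show ?case by (simp add: cvec_def)
    next
      case (Suc k)
      show ?case
      proof
        fix i
        let ?a = "mfw_x K \<delta> v q k $ i"
        let ?s = "untilde \<delta> (v q (Suc k)) $ i"
        have j: "Suc k \<in> {1..K}" using Suc.prems by simp
        have IH: "\<delta> \<le> ?a" "?a \<le> \<delta> + (1 - \<alpha>) / K * (\<Sum>j=1..k. c j $ i)"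
          using Suc by auto
        have sumk: "(\<Sum>j=1..k. c j $ i) \<le> real k"
        proof -
          have "(\<Sum>j=1..k. c j $ i) \<le> (\<Sum>j=1..k. (1::real))"
            by (rule sum_mono) (use C01 cC Suc.prems in auto)
          then show ?thesis by simp
        qed
        have "(1 - \<alpha>) / K * (\<Sum>j=1..k. c j $ i) \<le> (1 - \<alpha>) / K * real K"
          using sumk Suc.prems \<alpha>_lt Kp by (intro mult_left_mono) auto
        then have a1: "?a \<le> 1" using IH \<alpha>_ge Kp by simp
        have s0: "0 \<le> ?s" using vt[OF j, of i] C01[OF cC[OF j], of i] \<alpha>_lt \<delta>1 by simp
        have xs: "mfw_x K \<delta> v q (Suc k) $ i = ?a + (1 / K) * (?s * (1 - ?a))"
          by (simp add: hprod_def cvec_def)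
        have "0 \<le> (1 / K) * (?s * (1 - ?a))" using s0 a1 Kp by simp
        moreover have "(1 / K) * (?s * (1 - ?a)) \<le> (1 / K) * (?s * (1 - \<delta>))"
          using s0 IH Kp by (intro mult_left_mono) auto
        moreover have "?s * (1 - \<delta>) = (1 - \<alpha>) * c (Suc k) $ i" using vt[OF j, of i] \<delta>1 by simp
        ultimately have D: "0 \<le> (1 / K) * (?s * (1 - ?a))"
            "(1 / K) * (?s * (1 - ?a)) \<le> (1 / K) * ((1 - \<alpha>) * c (Suc k) $ i)" by auto
        have sS: "(\<Sum>j=1..Suc k. c j $ i) = (\<Sum>j=1..k. c j $ i) + c (Suc k) $ i" by simp
        have eq: "(1 - \<alpha>) / K * ((\<Sum>j=1..k. c j $ i) + c (Suc k) $ i)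
            = (1 - \<alpha>) / K * (\<Sum>j=1..k. c j $ i) + (1 / K) * ((1 - \<alpha>) * c (Suc k) $ i)"
          using Kp by (simp add: field_simps)
        show "\<delta> \<le> mfw_x K \<delta> v q (Suc k) $ i \<and>
          mfw_x K \<delta> v q (Suc k) $ i \<le> \<delta> + (1 - \<alpha>) / K * (\<Sum>j=1..Suc k. c j $ i)"
          unfolding xs sS eq using IH D by linarith
      qed
    qed
    define e where "e = (\<Sum>j\<in>{1..K}. (1 / real K) *\<^sub>R c j)"
    have eC: "e \<in> C" unfolding e_def
      by (rule convex_sum[OF _ C_convex]) (use K_pos cC in auto)
    define d where "d = inverse (1 - \<alpha>) *\<^sub>R (mfw_x K \<delta> v q k - cvec \<delta>)"
    have "0 \<le> d \<and> d \<le> e"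
      unfolding less_eq_vec_def
    proof (intro conjI allI)
      fix i
      from claim[OF k] have cl: "\<delta> \<le> mfw_x K \<delta> v q k $ i"
        "mfw_x K \<delta> v q k $ i \<le> \<delta> + (1 - \<alpha>) / K * (\<Sum>j=1..k. c j $ i)" by auto
      show "0 $ i \<le> d $ i" unfolding d_def using cl \<alpha>_lt by (simp add: cvec_def)
      have "(\<Sum>j=1..k. c j $ i) \<le> (\<Sum>j=1..K. c j $ i)"
        by (rule sum_mono2) (use k C01 cC in auto)
      then have sK: "(\<Sum>j=1..k. c j $ i) / K \<le> (\<Sum>j=1..K. c j $ i) / K"
        using Kp by (simp add: divide_right_mono)
      have di: "d $ i = (mfw_x K \<delta> v q k $ i - \<delta>) / (1 - \<alpha>)"
        by (simp add: d_def cvec_def divide_inverse mult.commute)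
      have "mfw_x K \<delta> v q k $ i - \<delta> \<le> ((\<Sum>j=1..k. c j $ i) / K) * (1 - \<alpha>)"
        using cl(2) by (simp add: field_simps)
      then have "d $ i \<le> (\<Sum>j=1..k. c j $ i) / K"
        unfolding di using \<alpha>_lt by (simp add: pos_divide_le_eq)
      then have "d $ i \<le> 1 / K * (\<Sum>j=1..K. c j $ i)"
        using sK by simp
      also have "\<dots> = e $ i" unfolding e_def by (simp add: sum_distrib_left)
      finally show "d $ i \<le> e $ i" .
    qed
    then have "d \<in> C" using C_down eC unfolding down_closed_def by blast
    moreover have "mfw_x K \<delta> v q k = (1 - \<alpha>) *\<^sub>R d + cvec \<delta>"
      unfolding d_def using \<alpha>_lt by simp
    ultimately show ?thesis unfolding shrink_iff by blast
  qed
  have untilde_eq: "hprod (cvec 1 - cvec \<delta>) (untilde \<delta> z) + cvec \<delta> = z" for z :: "real^'n"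
    using untilde_inv[of \<delta> z] \<delta>1 by simp
  show ?thesis
  proof (cases "Q = 0")
    case True then show ?thesis by simp
  next
    case False
    have L1: "1 \<le> L" using K_pos K_le by simp
    have T1: "1 \<in> {1..L*Q}" using L1 False by (simp add: Suc_le_eq)
    have G0: "0 \<le> G" using grad_bound[OF T1 C_zero] norm_ge_zero[of "grad 1 0"] by linarith
    have M0: "0 \<le> M1" using f_bound[OF T1 C_zero] f_nonneg[OF T1, of 0] CB C_zero unfolding B_def by auto
    have deriv_C: "(f t has_derivative (\<lambda>h. grad t x \<bullet> h)) (at x within C)"
      if t: "t \<in> {1..L*Q}" and x: "x \<in> C" for t x
      using has_derivative_subset[OF f_deriv[OF t] CB[unfolded B_def]] x CB unfolding B_def by auto
    have lipf: "\<bar>f t x - f t z\<bar> \<le> G * norm (x - z)" if t: "t \<in> {1..L*Q}" and "x \<in> C" "z \<in> C" for t x z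
      by (rule lip[OF C_convex deriv_C[OF t] grad_bound[OF t] that(2,3)])
    have contf: "continuous_on C (f t)" if t: "t \<in> {1..L*Q}" for t
      using has_derivative_continuous[OF deriv_C[OF t]] continuous_on_eq_continuous_within by blast
    have lipw: "\<bar>f t (z + \<delta> *\<^sub>R w) - f t z\<bar> \<le> G * \<delta>"
      if t: "t \<in> {1..L*Q}" and z: "z \<in> shrink_set C r \<delta>" and w: "norm w \<le> 1" for t z w
    proof -
      have "\<bar>f t (z + \<delta> *\<^sub>R w) - f t z\<bar> \<le> G * norm (z + \<delta> *\<^sub>R w - z)"
        by (rule lipf[OF t ballS[OF z w] SC[OF z]])
      also have "\<dots> = G * (\<delta> * norm w)" using \<delta>_pos by simp
      also have "\<dots> \<le> G * \<delta>" using G0 \<delta>_pos w by (intro mult_left_mono) (auto simp: mult_le_cancel_left1)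
      finally show ?thesis .
    qed
    have sm_up: "smooth \<delta> (f t) z \<le> f t z + G * \<delta>" if t: "t \<in> {1..L*Q}" and z: "z \<in> shrink_set C r \<delta>" for t z
      by (rule smooth_le[OF contf[OF t] ballS[OF z]]) (use lipw[OF t z] in fastforce)+
    have sm_lo: "f t z - G * \<delta> \<le> smooth \<delta> (f t) z" if t: "t \<in> {1..L*Q}" and z: "z \<in> shrink_set C r \<delta>" for t z
      by (rule smooth_ge[OF contf[OF t] ballS[OF z]]) (use lipw[OF t z] in fastforce)+
    have sm_M: "smooth \<delta> (f t) z \<le> M1" if t: "t \<in> {1..L*Q}" and z: "z \<in> shrink_set C r \<delta>" for t z
      by (rule smooth_le[OF contf[OF t] ballS[OF z]]) (use f_bound[OF t] ballS[OF z] in auto)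
    have bavg: "real L * block_avg L \<delta> f q (untilde \<delta> z) = (\<Sum>m=(q-1)*L+1..q*L. smooth \<delta> (f m) z)" for q z
      unfolding block_avg_def untilde_eq using L1 by simp
    define x' where "x' = (1 - \<alpha>) *\<^sub>R xstar + cvec \<delta>"
    have x'S: "x' \<in> shrink_set C r \<delta>" unfolding shrink_iff x'_def using xstar_in by auto
    have x'C: "x' \<in> C" by (rule SC[OF x'S])
    have "bounded C" using bounded_subset[OF bounded_cbox C_box] .
    then obtain a where a: "\<And>x. x \<in> C \<Longrightarrow> norm x \<le> a" unfolding bounded_iff by auto
    have "bdd_above (norm ` C)" using a by (auto simp: bdd_above_def)
    then have Rb: "norm xstar \<le> radius C" unfolding radius_def by (rule cSUP_upper[OF xstar_in])
    have R0: "0 \<le> radius C" using Rb norm_ge_zero[of xstar] by linarith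
    have "xstar - x' = \<alpha> *\<^sub>R xstar - cvec \<delta>" unfolding x'_def by (simp add: algebra_simps)
    then have "norm (xstar - x') \<le> norm (\<alpha> *\<^sub>R xstar) + norm (cvec \<delta> :: real^'n)"
      using norm_triangle_ineq4 by metis
    also have "\<dots> = \<alpha> * norm xstar + \<delta> * sqrt n" using \<alpha>_pos \<delta>_pos by (simp add: norm_cvec n_def)
    also have "\<dots> \<le> \<alpha> * radius C + \<delta> * sqrt n" using Rb \<alpha>_pos by simp
    finally have nd: "norm (xstar - x') \<le> \<alpha> * radius C + \<delta> * sqrt n" .
    define A where "A = (\<Sum>t=1..L*Q. f t xstar)"
    define A1 where "A1 = (\<Sum>t=1..L*Q. f t x')"
    define A2 where "A2 = (\<Sum>t=1..L*Q. f t xstar\<delta>)"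
    define A3 where "A3 = (\<Sum>t=1..L*Q. smooth \<delta> (f t) xstar\<delta>)"
    have "A - A1 = (\<Sum>t=1..L*Q. f t xstar - f t x')" unfolding A_def A1_def by (simp add: sum_subtractf)
    also have "\<dots> \<le> (\<Sum>t=1..L*Q. G * (\<alpha> * radius C + \<delta> * sqrt n))"
    proof (rule sum_mono)
      fix t assume t: "t \<in> {1..L*Q}"
      have "f t xstar - f t x' \<le> G * norm (xstar - x')" using lipf[OF t xstar_in x'C] by linarith
      also have "\<dots> \<le> G * (\<alpha> * radius C + \<delta> * sqrt n)" by (rule mult_left_mono[OF nd G0])
      finally show "f t xstar - f t x' \<le> G * (\<alpha> * radius C + \<delta> * sqrt n)" .
    qed
    also have "\<dots> = real (L*Q) * (G * (\<alpha> * radius C + \<delta> * sqrt n))" by simp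
    finally have I1: "A - A1 \<le> real (L*Q) * (G * (\<alpha> * radius C + \<delta> * sqrt n))" .
    have I2: "A1 \<le> A2" unfolding A1_def A2_def by (rule xstar\<delta>_max[OF x'S])
    have "A2 - A3 = (\<Sum>t=1..L*Q. f t xstar\<delta> - smooth \<delta> (f t) xstar\<delta>)" unfolding A2_def A3_def by (simp add: sum_subtractf)
    also have "\<dots> \<le> (\<Sum>t=1..L*Q. G * \<delta>)"
      by (rule sum_mono) (use sm_lo[OF _ xstar\<delta>_in] in fastforce)
    also have "\<dots> = real (L*Q) * (G * \<delta>)" by simp
    finally have I3: "A2 - A3 \<le> real (L*Q) * (G * \<delta>)" .
    define E1 where "E1 = real (L*Q) * (G * (\<alpha> * radius C + \<delta> * sqrt n)) + real (L*Q) * (G * \<delta>)"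
    have AE: "A - A3 \<le> E1" unfolding E1_def using I1 I2 I3 by linarith
    have E10: "0 \<le> E1" unfolding E1_def using G0 \<alpha>_pos R0 \<delta>_pos sn by (intro add_nonneg_nonneg mult_nonneg_nonneg) auto
    have e1: "1 \<le> exp (1::real)" by simp
    have AEe: "(1 / exp 1) * (A - A3) \<le> E1"
    proof (cases "A - A3 \<le> 0")
      case True
      then have "(1 / exp 1) * (A - A3) \<le> 0" by (intro mult_nonneg_nonpos) auto
      then show ?thesis using E10 by linarith
    next
      case False
      have "(1 / exp 1) * (A - A3) \<le> 1 * (A - A3)"
        using False e1 by (intro mult_right_mono) (auto simp: divide_le_eq)
      then show ?thesis using AE by (metis mult_1 order_trans)
    qed
    define X where "X q = mfw_x K \<delta> v q K" for q
    have P2: "(\<Sum>m=(q-1)*L+1..q*L. smooth \<delta> (f m) (X q)) - (\<Sum>m=(q-1)*L+1..q*L. f m (y m))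
        \<le> real K * M1 + real L * (G * \<delta>)" if q: "q \<in> {1..Q}" for q
    proof -
      have bij: "bij_betw (\<sigma> q) {1..L} {(q - 1) * L + 1 .. q * L}" by (rule \<sigma>_perm[OF q])
      have qL: "q * L \<le> L * Q" using q by (simp add: mult.commute)
      have mem: "\<sigma> q k \<in> {1..L*Q}" if k: "k \<in> {1..L}" for k
      proof -
        have "\<sigma> q k \<in> {(q - 1) * L + 1 .. q * L}" using bij_betwE[OF bij] k by blast
        then have "1 \<le> \<sigma> q k" "\<sigma> q k \<le> q * L" by auto
        then show ?thesis using le_trans[OF _ qL] by auto
      qed
      have XS: "X q \<in> shrink_set C r \<delta>" unfolding X_def by (rule iter[OF q]) simp
      define d where "d k = smooth \<delta> (f (\<sigma> q k)) (X q) - f (\<sigma> q k) (y (\<sigma> q k))" for k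
      have "(\<Sum>m=(q-1)*L+1..q*L. smooth \<delta> (f m) (X q)) - (\<Sum>m=(q-1)*L+1..q*L. f m (y m))
          = (\<Sum>m=(q-1)*L+1..q*L. smooth \<delta> (f m) (X q) - f m (y m))" by (simp add: sum_subtractf)
      also have "\<dots> = (\<Sum>k=1..L. d k)"
        unfolding d_def by (rule sum.reindex_bij_betw[OF bij, symmetric])
      also have "\<dots> = (\<Sum>k=1..K + (L - K). d k)" using K_le by simp
      also have "\<dots> = (\<Sum>k=1..K. d k) + (\<Sum>k=K+1..K + (L - K). d k)"
        by (rule sum.ub_add_nat) simp
      also have "(\<Sum>k=1..K. d k) \<le> (\<Sum>k=1..K. M1)"
      proof (rule sum_mono)
        fix k assume k: "k \<in> {1..K}"
        have kL: "k \<in> {1..L}" using k K_le by auto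
        have "norm (u q k) = 1" using u_sphere[OF q k] by simp
        then have yC: "y (\<sigma> q k) \<in> C"
          unfolding y_explore[OF q k] using ballS[OF iter[OF q], of k "u q k"] k by auto
        have "0 \<le> f (\<sigma> q k) (y (\<sigma> q k))" using f_nonneg[OF mem[OF kL]] yC CB unfolding B_def by auto
        then show "d k \<le> M1" unfolding d_def using sm_M[OF mem[OF kL] XS] by linarith
      qed
      also have "(\<Sum>k=K+1..K + (L - K). d k) \<le> (\<Sum>k=K+1..K + (L - K). G * \<delta>)"
      proof (rule sum_mono)
        fix k assume k: "k \<in> {K+1..K + (L - K)}"
        then have kL: "k \<in> {1..L}" "k \<in> {K+1..L}" using K_le by auto
        show "d k \<le> G * \<delta>" unfolding d_def y_exploit[OF q kL(2)] X_def[symmetric]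
          using sm_up[OF mem[OF kL(1)] XS] by linarith
      qed
      also have "(\<Sum>k=1..K. M1) + (\<Sum>k=K+1..K + (L - K). G * \<delta>) = real K * M1 + real (L - K) * (G * \<delta>)"
        by simp
      also have "\<dots> \<le> real K * M1 + real L * (G * \<delta>)"
        using G0 \<delta>_pos by (simp add: mult_right_mono)
      finally show ?thesis by simp
    qed
    define B' where "B' = (\<Sum>q=1..Q. \<Sum>m=(q-1)*L+1..q*L. smooth \<delta> (f m) (X q))"
    define B where "B = (\<Sum>q=1..Q. \<Sum>m=(q-1)*L+1..q*L. f m (y m))"
    have "B' - B = (\<Sum>q=1..Q. (\<Sum>m=(q-1)*L+1..q*L. smooth \<delta> (f m) (X q)) - (\<Sum>m=(q-1)*L+1..q*L. f m (y m)))"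
      unfolding B'_def B_def by (simp add: sum_subtractf)
    also have "\<dots> \<le> (\<Sum>q=1..Q. real K * M1 + real L * (G * \<delta>))" by (rule sum_mono) (rule P2)
    also have "\<dots> = real Q * (real K * M1 + real L * (G * \<delta>))" by simp
    finally have BB: "B' - B \<le> real Q * (real K * M1 + real L * (G * \<delta>))" .
    have hA: "(\<Sum>t=1..L*Q. (1 / exp 1) * f t xstar) = (1 / exp 1) * A" unfolding A_def by (simp add: sum_distrib_left)
    have hB: "(\<Sum>t=1..L*Q. f t (y t)) = B" unfolding B_def by (rule block_sum)
    have hA3: "real L * (\<Sum>q=1..Q. (1 / exp 1) * block_avg L \<delta> f q (untilde \<delta> xstar\<delta>)) = (1 / exp 1) * A3"
    proof -
      have "real L * (\<Sum>q=1..Q. (1 / exp 1) * block_avg L \<delta> f q (untilde \<delta> xstar\<delta>))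
          = (1 / exp 1) * (\<Sum>q=1..Q. real L * block_avg L \<delta> f q (untilde \<delta> xstar\<delta>))"
        by (simp add: sum_distrib_left algebra_simps)
      also have "\<dots> = (1 / exp 1) * A3" unfolding bavg A3_def block_sum[of "\<lambda>t. smooth \<delta> (f t) xstar\<delta>"] ..
      finally show ?thesis .
    qed
    have hB': "real L * (\<Sum>q=1..Q. block_avg L \<delta> f q (untilde \<delta> (mfw_x K \<delta> v q K))) = B'"
      unfolding B'_def X_def sum_distrib_left bavg ..
    have \<alpha>R: "\<alpha> * radius C = (sqrt n + 1) * radius C / r * \<delta>" unfolding \<alpha>_def by simp
    have key: "E1 + real Q * (real L * (G * \<delta>)) = ((sqrt n + 1) * radius C / r + sqrt n + 2) * real (L*Q) * G * \<delta>"
      unfolding E1_def \<alpha>R by (simp add: algebra_simps)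
    have QK: "real Q * (real K * M1) \<le> 2 * M1 * real K * real Q" using M0 by simp
    have goal: "(\<Sum>t=1..L*Q. (1 / exp 1) * f t xstar) - (\<Sum>t=1..L*Q. f t (y t))
      \<le> real L * (\<Sum>q=1..Q. (1 / exp 1) * block_avg L \<delta> f q (untilde \<delta> xstar\<delta>))
        - real L * (\<Sum>q=1..Q. block_avg L \<delta> f q (untilde \<delta> (mfw_x K \<delta> v q K)))
        + 2 * M1 * real K * real Q
        + ((sqrt n + 1) * radius C / r + sqrt n + 2) * real (L*Q) * G * \<delta>"
    proof -
      have s1: "(1 / exp 1) * (A - A3) = (1 / exp 1) * A - (1 / exp 1) * A3" by (rule right_diff_distrib)
      have s2: "real Q * (real K * M1 + real L * (G * \<delta>)) = real Q * (real K * M1) + real Q * (real L * (G * \<delta>))"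
        by (simp add: algebra_simps)
      show ?thesis unfolding hA hB hA3 hB' key[symmetric]
        using AEe BB QK s1 s2 by linarith
    qed
    then show ?thesis unfolding n_def .
  qed
qed
end
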